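(* Let $X$ be a countably infinite set and $W=W_F$. Let $\succeq$ be a preorder on $W_F$ satisfying Strong Pareto, Permutation Invariance, and Quasi-Independence. If $w,v\in W_F$ are such that $Z=\{x\in X: w(x)\neq v(x)\}$ is finite and $w\succeq v$, then $\sum_{x\in Z}(w(x)-v(x))\ge 0$.
   Context: $W_F$ is the set of functions $X\to\mathbb R$ with finite range; addition and scalar multiplication are pointwise. For a preorder $\succeq$, $w\succ v$ means $w\succeq v$ and not $v\succeq w$. For a permutation $\pi$ of $X$, $\pi(w)(x)=w(\pi(x))$. Strong Pareto: for all $w,v\in W$, if $w(x)\ge v(x)$ for all $x$ and $w(x)>v(x)$ for some $x$, then $w\succ v$. Permutation Invariance: for all $w,v\in W$ and every permutation $\pi$ of $X$, $w\succeq v$ iff $\pi(w)\succeq\pi(v)$. Quasi-Independence: for all $w,v,u\in W$, if $w\succeq v$ then for every $\alpha\in[0,1]$, $\alpha w+(1-\alpha)u\succeq \alpha v+(1-\alpha)u$. *)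

theory Defs
  imports Complex_Main "HOL-Library.Countable_Set"
begin

definition W_F :: "('x \<Rightarrow> real) set" where
  "W_F = {w. finite (range w)}"

definition preorder_on_W :: "('x \<Rightarrow> real) set \<Rightarrow> (('x \<Rightarrow> real) \<Rightarrow> ('x \<Rightarrow> real) \<Rightarrow> bool) \<Rightarrow> bool" where
  "preorder_on_W W R \<longleftrightarrow> (\<forall>w\<in>W. R w w) \<and>
     (\<forall>w\<in>W. \<forall>v\<in>W. \<forall>u\<in>W. R w v \<longrightarrow> R v u \<longrightarrow> R w u)"

definition strict_pref :: "(('x \<Rightarrow> real) \<Rightarrow> ('x \<Rightarrow> real) \<Rightarrow> bool) \<Rightarrow> ('x \<Rightarrow> real) \<Rightarrow> ('x \<Rightarrow> real) \<Rightarrow> bool" where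
  "strict_pref R w v \<longleftrightarrow> R w v \<and> \<not> R v w"

definition permute_util :: "('x \<Rightarrow> 'x) \<Rightarrow> ('x \<Rightarrow> real) \<Rightarrow> ('x \<Rightarrow> real)" where
  "permute_util \<pi> w = (\<lambda>x. w (\<pi> x))"

definition strong_pareto :: "('x \<Rightarrow> real) set \<Rightarrow> (('x \<Rightarrow> real) \<Rightarrow> ('x \<Rightarrow> real) \<Rightarrow> bool) \<Rightarrow> bool" where
  "strong_pareto W R \<longleftrightarrow> (\<forall>w\<in>W. \<forall>v\<in>W.
     (\<forall>x. w x \<ge> v x) \<and> (\<exists>x. w x > v x) \<longrightarrow> strict_pref R w v)"

definition permutation_invariance :: "('x \<Rightarrow> real) set \<Rightarrow> (('x \<Rightarrow> real) \<Rightarrow> ('x \<Rightarrow> real) \<Rightarrow> bool) \<Rightarrow> bool" where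
  "permutation_invariance W R \<longleftrightarrow> (\<forall>w\<in>W. \<forall>v\<in>W. \<forall>\<pi>. bij \<pi> \<longrightarrow>
     (R w v \<longleftrightarrow> R (permute_util \<pi> w) (permute_util \<pi> v)))"

definition quasi_independence :: "('x \<Rightarrow> real) set \<Rightarrow> (('x \<Rightarrow> real) \<Rightarrow> ('x \<Rightarrow> real) \<Rightarrow> bool) \<Rightarrow> bool" where
  "quasi_independence W R \<longleftrightarrow> (\<forall>w\<in>W. \<forall>v\<in>W. \<forall>u\<in>W. R w v \<longrightarrow>
     (\<forall>\<alpha>::real. 0 \<le> \<alpha> \<and> \<alpha> \<le> 1 \<longrightarrow>
        R (\<lambda>x. \<alpha> * w x + (1 - \<alpha>) * u x) (\<lambda>x. \<alpha> * v x + (1 - \<alpha>) * u x)))"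

end

theory Submission
  imports Defs
begin

lemma WF_mix:
  assumes "a \<in> W_F" "c \<in> W_F"
  shows "(\<lambda>x. \<alpha> * a x + (1 - \<alpha>) * c x) \<in> W_F"
proof -
  have "range (\<lambda>x. \<alpha> * a x + (1 - \<alpha>) * c x) \<subseteq> (\<lambda>(p,q). \<alpha> * p + (1 - \<alpha>) * q) ` (range a \<times> range c)"
    by auto
  moreover have "finite ((\<lambda>(p,q). \<alpha> * p + (1 - \<alpha>) * q) ` (range a \<times> range c))"
    using assms unfolding W_F_def by auto
  ultimately show ?thesis unfolding W_F_def by (auto intro: finite_subset)
qed

lemma WF_perm:
  assumes "a \<in> W_F"
  shows "permute_util \<pi> a \<in> W_F"
proof -
  have "range (permute_util \<pi> a) \<subseteq> range a" unfolding permute_util_def by auto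
  then show ?thesis using assms unfolding W_F_def by (auto intro: finite_subset)
qed

lemma mix_pref:
  assumes P: "preorder_on_W W_F R" and Q: "quasi_independence W_F R"
    and "a \<in> W_F" "b \<in> W_F" "c \<in> W_F" "d \<in> W_F"
    and "R a b" "R c d" and al: "0 \<le> \<alpha>" "\<alpha> \<le> 1"
  shows "R (\<lambda>x. \<alpha> * a x + (1 - \<alpha>) * c x) (\<lambda>x. \<alpha> * b x + (1 - \<alpha>) * d x)"
proof -
  have 1: "R (\<lambda>x. \<alpha> * a x + (1 - \<alpha>) * c x) (\<lambda>x. \<alpha> * b x + (1 - \<alpha>) * c x)"
  proof -
    have "\<forall>\<alpha>::real. 0 \<le> \<alpha> \<and> \<alpha> \<le> 1 \<longrightarrow>
        R (\<lambda>x. \<alpha> * a x + (1 - \<alpha>) * c x) (\<lambda>x. \<alpha> * b x + (1 - \<alpha>) * c x)"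
      using Q assms(3-5,7) unfolding quasi_independence_def by blast
    note A = this
    have h: "0 \<le> \<alpha> \<and> \<alpha> \<le> 1" using al by simp
    show ?thesis by (rule mp[OF spec[OF A, of \<alpha>] h])
  qed
  have "R (\<lambda>x. (1 - \<alpha>) * c x + (1 - (1 - \<alpha>)) * b x) (\<lambda>x. (1 - \<alpha>) * d x + (1 - (1 - \<alpha>)) * b x)"
  proof -
    have "\<forall>\<beta>::real. 0 \<le> \<beta> \<and> \<beta> \<le> 1 \<longrightarrow>
        R (\<lambda>x. \<beta> * c x + (1 - \<beta>) * b x) (\<lambda>x. \<beta> * d x + (1 - \<beta>) * b x)"
      using Q assms(4,5,6,8) unfolding quasi_independence_def by blast
    note A = this
    have h: "0 \<le> 1 - \<alpha> \<and> 1 - \<alpha> \<le> (1::real)" using al by simp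
    have "R (\<lambda>x. (1 - \<alpha>) * c x + (1 - (1 - \<alpha>)) * b x) (\<lambda>x. (1 - \<alpha>) * d x + (1 - (1 - \<alpha>)) * b x)"
      by (rule mp[OF spec[OF A, of "1 - \<alpha>"] h])
    then show ?thesis .
  qed
  moreover have "(\<lambda>x. (1 - \<alpha>) * c x + (1 - (1 - \<alpha>)) * b x) = (\<lambda>x. \<alpha> * b x + (1 - \<alpha>) * c x)"
    "(\<lambda>x. (1 - \<alpha>) * d x + (1 - (1 - \<alpha>)) * b x) = (\<lambda>x. \<alpha> * b x + (1 - \<alpha>) * d x)"
    by (auto simp: algebra_simps)
  ultimately have 2: "R (\<lambda>x. \<alpha> * b x + (1 - \<alpha>) * c x) (\<lambda>x. \<alpha> * b x + (1 - \<alpha>) * d x)" by simp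
  have m: "(\<lambda>x. \<alpha> * a x + (1 - \<alpha>) * c x) \<in> W_F" "(\<lambda>x. \<alpha> * b x + (1 - \<alpha>) * c x) \<in> W_F"
    "(\<lambda>x. \<alpha> * b x + (1 - \<alpha>) * d x) \<in> W_F" using WF_mix assms(3-6) by auto
  have "\<forall>w\<in>W_F. \<forall>v\<in>W_F. \<forall>u\<in>W_F. R w v \<longrightarrow> R v u \<longrightarrow> R w u"
    using P unfolding preorder_on_W_def by blast
  then show ?thesis using m 1 2 by blast
qed

lemma main:
  assumes P: "preorder_on_W W_F R"
    and SP: "strong_pareto W_F R"
    and PI: "permutation_invariance W_F R"
    and Q: "quasi_independence W_F R"
  shows "w \<in> W_F \<Longrightarrow> v \<in> W_F \<Longrightarrow> finite {x. w x \<noteq> v x} \<Longrightarrow> card {x. w x \<noteq> v x} = n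
    \<Longrightarrow> R w v \<Longrightarrow> (\<Sum>x\<in>{x. w x \<noteq> v x}. w x - v x) \<ge> 0"
proof (induction n arbitrary: w v rule: less_induct)
  case (less n w v)
  define D where "D = {x. w x \<noteq> v x}"
  have fD: "finite D" using less.prems(3) D_def by simp
  show ?case
  proof (cases "\<forall>x\<in>D. w x - v x \<ge> 0")
    case True
    then have "(\<Sum>x\<in>D. w x - v x) \<ge> 0" by (simp add: sum_nonneg)
    then show ?thesis by (simp add: D_def)
  next
    case False
    then obtain b where bD: "b \<in> D" and db: "w b - v b < 0" by (meson not_le)
    show ?thesis
    proof (cases "\<forall>x\<in>D. w x - v x \<le> 0")
      case True
      have "\<forall>x. v x \<ge> w x"
      proof
        fix x show "v x \<ge> w x" using True[rule_format, of x] unfolding D_def by (cases "w x = v x") auto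
      qed
      moreover have "\<exists>x. v x > w x" using db by auto
      moreover have "\<forall>w\<in>W_F. \<forall>v\<in>W_F. (\<forall>x. w x \<ge> v x) \<and> (\<exists>x. w x > v x) \<longrightarrow> strict_pref R w v"
        using SP unfolding strong_pareto_def by blast
      ultimately have "strict_pref R v w" using less.prems(1,2) by simp
      then have "\<not> R w v" unfolding strict_pref_def by simp
      then show ?thesis using less.prems(5) by contradiction
    next
      case False
      then obtain a where aD: "a \<in> D" and da: "w a - v a > 0" by (meson not_le)
      have ab: "a \<noteq> b" using da db by auto
      define \<tau> where "\<tau> = (\<lambda>x. if x = a then b else if x = b then a else x)"
      have tt: "\<tau> \<circ> \<tau> = id" unfolding \<tau>_def by auto
      have bij: "bij \<tau>" by (rule o_bij[OF tt tt])
      define \<alpha> where "\<alpha> = - (w b - v b) / ((w a - v a) - (w b - v b))"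
      have al0: "0 \<le> \<alpha>" and al1: "\<alpha> \<le> 1" using da db unfolding \<alpha>_def by (auto simp: field_simps)
      have alz: "\<alpha> * (w a - v a) + (1 - \<alpha>) * (w b - v b) = 0"
        using da db unfolding \<alpha>_def by (auto simp: field_simps)
      define w' where "w' = (\<lambda>x. \<alpha> * w x + (1 - \<alpha>) * permute_util \<tau> w x)"
      define v' where "v' = (\<lambda>x. \<alpha> * v x + (1 - \<alpha>) * permute_util \<tau> v x)"
      have "\<forall>w\<in>W_F. \<forall>v\<in>W_F. \<forall>\<pi>. bij \<pi> \<longrightarrow> (R w v \<longleftrightarrow> R (permute_util \<pi> w) (permute_util \<pi> v))"
        using PI unfolding permutation_invariance_def by blast
      then have Rt: "R (permute_util \<tau> w) (permute_util \<tau> v)"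
        using less.prems(1,2,5) bij by blast
      have R': "R w' v'" unfolding w'_def v'_def
        by (rule mix_pref[OF P Q]) (use less.prems WF_perm Rt al0 al1 in auto)
      have W': "w' \<in> W_F" "v' \<in> W_F" unfolding w'_def v'_def
        by (intro WF_mix WF_perm less.prems(1) less.prems(2))+
      have dd: "w' x - v' x = \<alpha> * (w x - v x) + (1 - \<alpha>) * (w (\<tau> x) - v (\<tau> x))" for x
        unfolding w'_def v'_def permute_util_def by (simp add: algebra_simps)
      have other: "x \<noteq> a \<Longrightarrow> x \<noteq> b \<Longrightarrow> w' x - v' x = w x - v x" for x
        using dd[of x] unfolding \<tau>_def by (simp add: algebra_simps)
      have dA: "w' a - v' a = 0" using dd[of a] alz unfolding \<tau>_def by simp
      have dB: "w' b - v' b = \<alpha> * (w b - v b) + (1 - \<alpha>) * (w a - v a)"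
        using dd[of b] ab unfolding \<tau>_def by simp
      define D' where "D' = {x. w' x \<noteq> v' x}"
      have sub: "D' \<subseteq> D - {a}"
      proof
        fix x assume "x \<in> D'"
        then have nx: "w' x \<noteq> v' x" unfolding D'_def by simp
        have xa: "x \<noteq> a" using nx dA by auto
        have "x \<in> D"
        proof (cases "x = b")
          case True then show ?thesis using bD by simp
        next
          case False
          then have "w' x - v' x = w x - v x" using other xa by blast
          then show ?thesis using nx unfolding D_def by auto
        qed
        then show "x \<in> D - {a}" using xa by simp
      qed
      have fD': "finite D'" using sub fD finite_subset by blast
      have "card D' \<le> card (D - {a})" using sub fD by (simp add: card_mono)
      also have "\<dots> < card D" using fD aD by (rule card_Diff1_less)
      finally have lt: "card D' < n" using less.prems(4) D_def by simp
      have IH: "(\<Sum>x\<in>D'. w' x - v' x) \<ge> 0"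
        using less.IH[OF lt W' fD'[unfolded D'_def] _ R'] D'_def by simp
      have s1: "(\<Sum>x\<in>D'. w' x - v' x) = (\<Sum>x\<in>D. w' x - v' x)"
        by (rule sum.mono_neutral_left[OF fD]) (use sub in blast, simp add: D'_def)
      have bD': "b \<in> D - {a}" using bD ab by auto
      have s2: "(\<Sum>x\<in>D. w' x - v' x) = (w' a - v' a) + ((w' b - v' b) + (\<Sum>x\<in>D - {a} - {b}. w' x - v' x))"
      proof -
        have fDa: "finite (D - {a})" using fD by simp
        show ?thesis by (subst sum.remove[OF fD aD], subst sum.remove[OF fDa bD'], rule refl)
      qed
      have s3: "(\<Sum>x\<in>D. w x - v x) = (w a - v a) + ((w b - v b) + (\<Sum>x\<in>D - {a} - {b}. w x - v x))"
      proof -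
        have fDa: "finite (D - {a})" using fD by simp
        show ?thesis by (subst sum.remove[OF fD aD], subst sum.remove[OF fDa bD'], rule refl)
      qed
      have s4: "(\<Sum>x\<in>D - {a} - {b}. w' x - v' x) = (\<Sum>x\<in>D - {a} - {b}. w x - v x)"
        by (rule sum.cong) (auto simp: other)
      have eq: "(\<Sum>x\<in>D. w x - v x) = (\<Sum>x\<in>D'. w' x - v' x)"
      proof -
        have e: "\<alpha> * (w b - v b) + (1 - \<alpha>) * (w a - v a) + (\<alpha> * (w a - v a) + (1 - \<alpha>) * (w b - v b))
            = (w a - v a) + (w b - v b)" by (simp add: algebra_simps)
        show ?thesis unfolding s1 s2 s3 s4 dA dB using e alz by linarith
      qed
      have "(\<Sum>x\<in>D. w x - v x) \<ge> 0" using eq IH by linarith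
      then show ?thesis unfolding D_def .
    qed
  qed
qed

theorem lemma1:
  fixes R :: "('x \<Rightarrow> real) \<Rightarrow> ('x \<Rightarrow> real) \<Rightarrow> bool"
    and w v :: "'x \<Rightarrow> real"
  assumes "countable (UNIV :: 'x set)" and "infinite (UNIV :: 'x set)"
    and "preorder_on_W W_F R"
    and "strong_pareto W_F R"
    and "permutation_invariance W_F R"
    and "quasi_independence W_F R"
    and "w \<in> W_F" and "v \<in> W_F"
    and "finite {x. w x \<noteq> v x}"
    and "R w v"
  shows "(\<Sum>x\<in>{x. w x \<noteq> v x}. w x - v x) \<ge> 0"
  by (rule main[OF assms(3-6), where w=w and v=v and n="card {x. w x \<noteq> v x}", OF assms(7-9) refl assms(10)])

end
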